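(* Let $\beta=(1+\sqrt{13})/2$, the positive root of $x^2-x-3$, and define $F:[0,1+\beta)\to[0,1+\beta)$ by $F(x)=\beta x-y_j$ for $x\in I_j$, where $I_1=[0,1)$, $I_2=[1,1+1/\beta)$, $I_3=[1+1/\beta,1+2/\beta)$, $I_4=[1+2/\beta,\beta)$, $I_5=[\beta,1+\beta)$ and $y_1=0$, $y_2=0$, $y_3=1$, $y_4=2$, $y_5=3+\beta$. Then the orbit $\{F^n(\beta-1):n\ge0\}$ of $\beta-1$ under $F$ is infinite.
   Context: This $F$ is the generalized $\beta$-transformation associated with the one-dimensional substitution $l\to lsss$, $s\to l$ with tile lengths $|l|=\beta$, $|s|=1$; note $1+3/\beta=\beta$. *)

theory Defs
  imports Complex_Main
begin

definition beta :: real where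
  "beta = (1 + sqrt 13) / 2"

text \<open>The generalized beta-transformation on [0, 1 + beta); outside this interval
  (never reached from points in it) it is set to the identity.\<close>
definition F :: "real \<Rightarrow> real" where
  "F x = (if 0 \<le> x \<and> x < 1 then beta * x
          else if 1 \<le> x \<and> x < 1 + 1 / beta then beta * x
          else if 1 + 1 / beta \<le> x \<and> x < 1 + 2 / beta then beta * x - 1
          else if 1 + 2 / beta \<le> x \<and> x < beta then beta * x - 2
          else if beta \<le> x \<and> x < 1 + beta then beta * x - (3 + beta)
          else x)"

end

theory Submission imports Defs begin

lemma desc: "(p::int)^2 - p*q - 3*q^2 = 0 \<Longrightarrow> q = 0"
proof (induction "nat \<bar>q\<bar>" arbitrary: p q rule: less_induct)
  case less
  show ?case
  proof (rule ccontr)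
    assume q0: "q \<noteq> 0"
    have ev: "even p \<and> even q"
    proof (rule ccontr)
      assume "\<not> (even p \<and> even q)"
      then have "odd (p^2 - p*q - 3*q^2)" by auto
      with less.prems show False by simp
    qed
    then obtain p' q' where pq: "p = 2*p'" "q = 2*q'" by (auto elim!: evenE)
    have "4*(p'^2 - p'*q' - 3*q'^2) = 0" using less.prems pq by (simp add: algebra_simps power2_eq_square)
    then have e: "p'^2 - p'*q' - 3*q'^2 = 0" by simp
    have "nat \<bar>q'\<bar> < nat \<bar>q\<bar>" using q0 pq by auto
    from less.hyps[OF this e] pq q0 show False by simp
  qed
qed

lemma beta_sq: "beta^2 = beta + 3"
  unfolding beta_def by (simp add: power2_eq_square algebra_simps)

lemma beta_bounds: "2.3 < beta" "beta < 2.31"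
proof -
  have "3.6 < sqrt 13" by (rule real_less_rsqrt) (simp add: power2_eq_square)
  moreover have "sqrt 13 < sqrt (3.62^2)" by (subst real_sqrt_less_iff) (simp add: power2_eq_square)
  then have "sqrt 13 < 3.62" by simp
  ultimately show "2.3 < beta" "beta < 2.31" unfolding beta_def by auto
qed

lemma uniq:
  fixes a b c d :: int
  assumes "a + b*beta = c + d*beta"
  shows "a = c \<and> b = d"
proof -
  define p where "p = a - c"
  define q where "q = d - b"
  have pq: "real_of_int p = q * beta" using assms unfolding p_def q_def by (simp add: algebra_simps)
  have "real_of_int (p^2 - p*q - 3*q^2) = (q*beta)^2 - q*beta*q - 3*q^2" using pq by (simp add: power2_eq_square)
  also have "\<dots> = q^2 * (beta^2 - beta - 3)" by (simp add: algebra_simps power2_eq_square)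
  also have "\<dots> = 0" using beta_sq by simp
  finally have "p^2 - p*q - 3*q^2 = 0" by linarith
  then have "q = 0" by (rule desc)
  with pq have "p = 0" by simp
  with \<open>q=0\<close> show ?thesis unfolding p_def q_def by simp
qed


lemma beta_pos: "beta > 0" using beta_bounds by simp

lemma divc_less: "x < 1 + c/beta \<longleftrightarrow> beta*x < beta + c"
  using beta_pos by (simp add: field_simps)
lemma divc_le: "1 + c/beta \<le> x \<longleftrightarrow> beta + c \<le> beta*x"
  using beta_pos by (simp add: field_simps)
lemma one_div: "1 + 1/beta = 1 + 1/beta" ..

lemma xlt_beta: "x < beta \<longleftrightarrow> beta*x < beta + 3"
  using beta_pos beta_sq by (metis mult_less_cancel_left_pos power2_eq_square)
lemma beta_le: "beta \<le> x \<longleftrightarrow> beta + 3 \<le> beta*x"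
  using beta_pos beta_sq by (metis mult_le_cancel_left_pos power2_eq_square)
lemma xlt_1beta: "x < 1 + beta \<longleftrightarrow> beta*x < 2*beta + 3"
proof -
  have "x < 1 + beta \<longleftrightarrow> beta*x < beta*(1+beta)" using beta_pos by simp
  also have "beta*(1+beta) = 2*beta+3" using beta_sq by (simp add: algebra_simps power2_eq_square)
  finally show ?thesis .
qed
lemma x_lt1: "x < 1 \<longleftrightarrow> beta*x < beta" using beta_pos by simp
lemma x_ge0: "0 \<le> x \<longleftrightarrow> 0 \<le> beta*x" using beta_pos by (simp add: zero_le_mult_iff)

lemma Fstep:
  assumes "0 \<le> x" "x < 1 + beta"
  shows "0 \<le> F x \<and> F x < 1 + beta \<and>
    (\<exists>(y0::int) (y1::int). F x = beta*x - (y0 + y1*beta) \<and> \<bar>y0 + y1*(1-beta)\<bar> \<le> 2)"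
proof -
  define u where "u = beta * x"
  have u: "0 \<le> u" "u < 2*beta+3" using assms x_ge0 xlt_1beta u_def by auto
  have c1: "x < 1 \<longleftrightarrow> u < beta" using x_lt1 u_def by simp
  have c2: "x < 1 + 1/beta \<longleftrightarrow> u < beta + 1" using divc_less[of x 1] u_def by simp
  have c3: "x < 1 + 2/beta \<longleftrightarrow> u < beta + 2" using divc_less[of x 2] u_def by simp
  have c4: "x < beta \<longleftrightarrow> u < beta + 3" using xlt_beta u_def by simp
  have Fu: "F x = (if u < beta + 1 then u else if u < beta + 2 then u - 1
       else if u < beta + 3 then u - 2 else u - (3 + beta))"
  proof -
    have d1: "1 \<le> x \<longleftrightarrow> beta \<le> u" using c1 by linarith
    have d2: "1 + 1/beta \<le> x \<longleftrightarrow> beta + 1 \<le> u" using c2 by linarith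
    have d3: "1 + 2/beta \<le> x \<longleftrightarrow> beta + 2 \<le> u" using c3 by linarith
    have d4: "beta \<le> x \<longleftrightarrow> beta + 3 \<le> u" using c4 by linarith
    have e: "F x = (if 0 \<le> x \<and> u < beta then u
          else if beta \<le> u \<and> u < beta + 1 then u
          else if beta + 1 \<le> u \<and> u < beta + 2 then u - 1
          else if beta + 2 \<le> u \<and> u < beta + 3 then u - 2
          else if beta + 3 \<le> u \<and> x < 1 + beta then u - (3 + beta)
          else x)"
      unfolding F_def c1 c2 c3 c4 d1 d2 d3 d4 u_def[symmetric] by (rule refl)
    show ?thesis unfolding e using assms u by auto
  qed
  have b: "2.3 < beta" "beta < 2.31" by (rule beta_bounds)+
  show ?thesis
  proof (cases "u < beta + 1")
    case True
    have h: "F x = beta*x - (of_int 0 + of_int 0 * beta)" using Fu True by (simp add: u_def)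
    have "\<exists>(y0::int) (y1::int). F x = beta*x - (y0 + y1*beta) \<and> \<bar>y0 + y1*(1-beta)\<bar> \<le> 2"
      apply (rule exI[of _ "0::int"], rule exI[of _ "0::int"]) using h b by simp
    then show ?thesis using Fu u b True by auto
  next
    case f1: False
    show ?thesis
    proof (cases "u < beta + 2")
      case True
      have h: "F x = beta*x - (of_int 1 + of_int 0 * beta)" using Fu True f1 by (simp add: u_def)
      have "\<exists>(y0::int) (y1::int). F x = beta*x - (y0 + y1*beta) \<and> \<bar>y0 + y1*(1-beta)\<bar> \<le> 2"
        apply (rule exI[of _ "1::int"], rule exI[of _ "0::int"]) using h b by simp
      then show ?thesis using Fu u b True f1 by auto
    next
      case f2: False
      show ?thesis
      proof (cases "u < beta + 3")
        case True
        have h: "F x = beta*x - (of_int 2 + of_int 0 * beta)" using Fu True f1 f2 by (simp add: u_def)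
        have "\<exists>(y0::int) (y1::int). F x = beta*x - (y0 + y1*beta) \<and> \<bar>y0 + y1*(1-beta)\<bar> \<le> 2"
          apply (rule exI[of _ "2::int"], rule exI[of _ "0::int"]) using h b by simp
        then show ?thesis using Fu u b True f1 f2 by auto
      next
        case False
        have h: "F x = beta*x - (of_int 3 + of_int 1 * beta)" using Fu False f1 f2 by (simp add: u_def)
        have "\<exists>(y0::int) (y1::int). F x = beta*x - (y0 + y1*beta) \<and> \<bar>y0 + y1*(1-beta)\<bar> \<le> 2"
          apply (rule exI[of _ "3::int"], rule exI[of _ "1::int"]) using h b by simp
        then show ?thesis using Fu u b False f1 f2 by auto
      qed
    qed
  qed
qed

lemma mulb: "beta * (of_int a + of_int b * beta) = of_int (3*b) + of_int (a+b) * beta"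
proof -
  have bb: "beta*beta = beta+3" using beta_sq by (simp add: power2_eq_square)
  have "beta * (of_int a + of_int b * beta) = a*beta + b*(beta*beta)" by (simp add: algebra_simps)
  also have "\<dots> = of_int (3*b) + of_int (a+b) * beta" unfolding bb by (simp add: algebra_simps)
  finally show ?thesis .
qed

lemma bb2: "beta * (beta * c) = beta * c + 3 * c"
  using beta_sq by (simp add: power2_eq_square algebra_simps flip: mult.assoc)

definition cj :: "real \<Rightarrow> real" where
  "cj x = (THE c. \<exists>(a::int) (b::int). x = a + b*beta \<and> c = a + b*(1-beta))"

lemma cj_eq: "cj (of_int a + of_int b*beta) = a + b*(1-beta)"
  unfolding cj_def
proof (rule the_equality)
  show "\<exists>(a'::int) (b'::int). a + b*beta = a' + b'*beta \<and> a + b*(1-beta) = a' + b'*(1-beta)" by blast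
next
  fix c assume "\<exists>(a'::int) (b'::int). a + b*beta = a' + b'*beta \<and> c = a' + b'*(1-beta)"
  then obtain a' b' :: int where h: "a + b*beta = a' + b'*beta" "c = a' + b'*(1-beta)" by blast
  from uniq[OF h(1)] h(2) show "c = a + b*(1-beta)" by simp
qed

lemma cj_step:
  assumes "0 \<le> x" "x < 1 + beta" "x = of_int a + of_int b * beta"
  shows "\<exists>(a'::int) (b'::int). F x = a' + b'*beta \<and> \<bar>cj (F x)\<bar> \<ge> (beta - 1) * \<bar>cj x\<bar> - 2"
proof -
  obtain y0 y1 :: int where y: "F x = beta*x - (y0 + y1*beta)" "\<bar>y0 + y1*(1-beta)\<bar> \<le> 2"
    using Fstep[OF assms(1,2)] by blast
  have e: "F x = of_int (3*b - y0) + of_int (a+b-y1) * beta"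
    using y(1) unfolding assms(3) mulb by (simp add: algebra_simps)
  have cx: "cj x = a + b*(1-beta)" using assms(3) cj_eq by simp
  have "cj (F x) = (1-beta) * cj x - (y0 + y1*(1-beta))"
    unfolding e cj_eq cx by (simp add: algebra_simps bb2)
  then have "\<bar>cj (F x)\<bar> \<ge> \<bar>(1-beta) * cj x\<bar> - 2" using y(2) by linarith
  moreover have "\<bar>(1-beta) * cj x\<bar> = (beta - 1) * \<bar>cj x\<bar>" using beta_bounds by (simp add: abs_mult)
  ultimately have "\<bar>cj (F x)\<bar> \<ge> (beta - 1) * \<bar>cj x\<bar> - 2" by linarith
  with e show ?thesis by blast
qed


lemma bb: "beta * beta = beta + 3" using beta_sq by (simp add: power2_eq_square)

lemma F1: "F (beta - 1) = 3"
proof -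
  have e: "beta * (beta - 1) = 3" using bb by (simp add: algebra_simps)
  show ?thesis unfolding F_def using beta_bounds by (simp add: divc_less divc_le e)
qed
lemma F2: "F 3 = 2*beta - 3"
proof -
  show ?thesis unfolding F_def using beta_bounds by (simp add: divc_less divc_le)
qed
lemma F3: "F (2*beta - 3) = 5 - beta"
proof -
  have e: "beta * (2*beta - 3) = 6 - beta" using bb by (simp add: algebra_simps)
  show ?thesis unfolding F_def using beta_bounds by (simp add: divc_less divc_le e)
qed
lemma F4: "F (5 - beta) = 3*beta - 6"
proof -
  have e: "beta * (5 - beta) = 4*beta - 3" using bb by (simp add: algebra_simps)
  show ?thesis unfolding F_def using beta_bounds by (simp add: divc_less divc_le e)
qed

theorem mainTheorem6:
  shows "infinite {(F ^^ n) (beta - 1) | n :: nat. True}"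
proof -
  define x where "x n = (F^^n) (beta - 1)" for n
  have xs: "x (Suc n) = F (x n)" for n unfolding x_def by simp
  have inv: "0 \<le> x n \<and> x n < 1 + beta \<and> (\<exists>(a::int) (b::int). x n = a + b*beta)" for n
  proof (induction n)
    case 0
    have e: "x 0 = of_int (-1) + of_int 1 * beta" unfolding x_def by simp
    then have "\<exists>(a::int) (b::int). x 0 = a + b*beta" by blast
    then show ?case using beta_bounds e by auto
  next
    case (Suc n)
    then obtain a b :: int where ab: "x n = a + b*beta" by blast
    from Suc Fstep[of "x n"] cj_step[of "x n" a b] ab show ?case unfolding xs by auto
  qed
  have gr: "\<bar>cj (x (Suc n))\<bar> \<ge> (beta - 1) * \<bar>cj (x n)\<bar> - 2" for n
  proof -
    obtain a b :: int where ab: "x n = a + b*beta" using inv by blast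
    have "0 \<le> x n" "x n < 1 + beta" using inv by auto
    from cj_step[OF this ab] show ?thesis unfolding xs by auto
  qed
  have x4: "x 4 = of_int (-6) + of_int 3 * beta"
    by (simp add: x_def eval_nat_numeral F1 F2 F3 F4)
  have c4: "\<bar>cj (x 4)\<bar> \<ge> 7" unfolding x4 cj_eq using beta_bounds by simp
  have stp: "\<bar>cj (x n)\<bar> \<ge> 7 \<Longrightarrow> \<bar>cj (x (Suc n))\<bar> \<ge> \<bar>cj (x n)\<bar> + 1/10" for n
  proof -
    assume h: "\<bar>cj (x n)\<bar> \<ge> 7"
    have "(beta - 1) * \<bar>cj (x n)\<bar> \<ge> 1.3 * \<bar>cj (x n)\<bar>"
      using beta_bounds by (intro mult_right_mono) auto
    with gr[of n] h show ?thesis by linarith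
  qed
  have big: "n \<ge> 4 \<Longrightarrow> \<bar>cj (x n)\<bar> \<ge> 7" for n
  proof (induction n rule: dec_induct)
    case base then show ?case using c4 .
  next
    case (step m) then show ?case using stp[of m] by linarith
  qed
  have mono: "4 \<le> m \<Longrightarrow> m < n \<Longrightarrow> \<bar>cj (x m)\<bar> < \<bar>cj (x n)\<bar>" for m n
  proof (induction n)
    case 0 then show ?case by simp
  next
    case (Suc n)
    have s: "\<bar>cj (x (Suc n))\<bar> \<ge> \<bar>cj (x n)\<bar> + 1/10" if "4 \<le> n" using stp big that by blast
    show ?case
    proof (cases "m = n")
      case True then show ?thesis using s Suc.prems by auto
    next
      case False then show ?thesis using s Suc by auto
    qed
  qed
  have inj: "inj_on x {4..}"
  proof (rule inj_onI)
    fix m n assume m: "m \<in> {4..}" and n: "n \<in> {4..}" and e: "x m = x n"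
    show "m = n"
    proof (rule ccontr)
      assume "m \<noteq> n"
      then consider "m < n" | "n < m" by linarith
      then show False using mono[of m n] mono[of n m] m n e by cases auto
    qed
  qed
  have "infinite (x ` {4..})"
    using inj finite_imageD infinite_Ici by blast
  moreover have "x ` {4..} \<subseteq> {(F ^^ n) (beta - 1) | n :: nat. True}" unfolding x_def by auto
  ultimately show ?thesis using infinite_super by blast
qed

end
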